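(* Let $d \ge 1$, $p \in [0,1/2)$, $\mathbf{x} \in \mathbb{R}^d$, $G > 0$, $\lambda > 0$. Let measurements $y_k = \langle \mathbf{x}, \mathbf{a}_k\rangle + \epsilon_k$ ($k = 0,1,\dots$) be given, where $\epsilon_k = \xi_k\nu_k$ with $\xi_k$ an indicator equal to $1$ with probability $p$, independent of all other variables, and $\nu_k$ arbitrary (possibly dependent on $\mathbf{x}$ and the measurement vectors). Let $\mathcal{F}_k$ be the $\sigma$-algebra generated by $\{\mathbf{a}_0,\epsilon_0\},\dots,\{\mathbf{a}_{k-1},\epsilon_{k-1}\}$, and assume each $\mathbf{a}_k \in \mathbb{R}^d$ has unit norm and is independent of $\mathcal{F}_k$, the vectors $\sqrt d\,\mathbf{a}_k$ are i.i.d. mean-zero isotropic, and for every $\mathcal{F}_k$-measurable $\mathbf{u}$, $\mathbb{E}_{\mathbf{a}_k}[|\langle \mathbf{u},\mathbf{a}_k\rangle| \mid \mathbf{u}] \ge \widetilde{C}\|\mathbf{u}\|_2/\sqrt d$ for a constant $\widetilde C > 0$. Let $\mathbf{x}_0 = 0$, $\mathbf{x}_{k+1} = \mathbf{x}_k + G\lambda^{-k}\mathrm{sign}(y_k - \langle \mathbf{x}_k,\mathbf{a}_k\rangle)\mathbf{a}_k$, $\mathbf{u}_k := \lambda^k(\mathbf{x} - \mathbf{x}_k)/G$ and $Y_k := \|\mathbf{u}_k\|_2^2$, so that $$Y_{k+1} = \lambda^2\Big\{\|\mathbf{u}_k\|^2 - 2\langle \mathbf{u}_k,\mathbf{a}_k\rangle\,\mathrm{sign}\big(\langle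 \mathbf{u}_k,\mathbf{a}_k\rangle + \lambda^k\epsilon_k/G\big) + 1\Big\}.$$ Suppose $$1 < \lambda^2 \le 1 + \widetilde{C}^2\frac{(1-2p)^2}{9d} < \frac{50}{49},$$ and set $a = \frac{1}{2(\lambda^2-1)}$, $b = \frac{3}{2(\lambda^2-1)}$, $\eta = c^*\sqrt{\lambda^2-1}$ with $$c^* = \frac{1}{8\lambda^2}\Big[\frac{\sqrt2\,\lambda^2(1-2p)\widetilde C}{\sqrt d} - \sqrt{\lambda^2-1}\Big(\frac32 + \lambda^2\Big)\Big].$$ Then $$\mathbb{E}\big[e^{\eta(Y_{k+1} - Y_k)}\mathbb{1}_{\{a \le Y_k < b\}} \mid \mathcal{F}_k\big] \le 1 - \frac{\widetilde{C}^2(1-2p)^2}{60 d}.$$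
   Context: $\mathrm{sign}$ is the sign function. The process $Y_k$ is the rescaled squared error of SGD with exponentially decaying step size for $\ell_1$ linear regression under Massart noise. *)

theory Defs
  imports "HOL-Probability.Probability"
begin

text \<open>Sign function taking values in {-1,1} (convention sign 0 = 1), so that
  the norm of sign(t) times a unit vector is 1, as the displayed recursion for Y requires.\<close>
definition sign :: "real \<Rightarrow> real" where
  "sign t = (if t \<ge> 0 then 1 else -1)"

definition gen_sets :: "'a measure \<Rightarrow> ('a \<Rightarrow> 'b::topological_space) \<Rightarrow> 'a set set" where
  "gen_sets M X = {X -` A \<inter> space M | A. A \<in> sets borel}"

definition filt :: "'a measure \<Rightarrow> (nat \<Rightarrow> 'a \<Rightarrow> real^'n) \<Rightarrow> (nat \<Rightarrow> 'a \<Rightarrow> real) \<Rightarrow> nat \<Rightarrow> 'a measure" where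
  "filt M a eps k = sigma (space M) (\<Union>j\<in>{..<k}. gen_sets M (a j) \<union> gen_sets M (eps j))"

fun sgd_iter :: "real \<Rightarrow> real \<Rightarrow> (nat \<Rightarrow> 'a \<Rightarrow> real^'n) \<Rightarrow> (nat \<Rightarrow> 'a \<Rightarrow> real) \<Rightarrow> nat \<Rightarrow> 'a \<Rightarrow> real^'n" where
  "sgd_iter G lam a y 0 \<omega> = 0"
| "sgd_iter G lam a y (Suc k) \<omega> =
     sgd_iter G lam a y k \<omega>
     + (G / lam ^ k * sign (y k \<omega> - sgd_iter G lam a y k \<omega> \<bullet> a k \<omega>)) *\<^sub>R a k \<omega>"

end

theory Submission
  imports Defs
begin


lemma indep_var_from:
  assumes M: "prob_space M" and ind: "prob_space.indep_set M A B"
    and sA: "sigma_algebra (space M) A" and sB: "sigma_algebra (space M) B"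
    and X: "X \<in> measurable M S" and Y: "Y \<in> measurable M T"
    and XA: "\<And>C. C \<in> sets S \<Longrightarrow> X -` C \<inter> space M \<in> A"
    and YB: "\<And>C. C \<in> sets T \<Longrightarrow> Y -` C \<inter> space M \<in> B"
  shows "prob_space.indep_var M S X T Y"
proof -
  interpret prob_space M by fact
  have 1: "sigma_sets (space M) {X -` C \<inter> space M | C. C \<in> sets S} \<subseteq> A"
    using sA XA by (intro sigma_algebra.sigma_sets_subset) auto
  have 2: "sigma_sets (space M) {Y -` C \<inter> space M | C. C \<in> sets T} \<subseteq> B"
    using sB YB by (intro sigma_algebra.sigma_sets_subset) auto
  show ?thesis unfolding indep_var_eq
    using X Y ind 1 2 unfolding indep_sets2_eq by blast
qed

lemma freeze_integral:
  fixes f :: "'b \<times> 'b \<Rightarrow> real" and S :: "'b measure" and T :: "'b measure"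
  assumes M: "prob_space M" and ind: "prob_space.indep_var M S X T Y"
    and f: "f \<in> borel_measurable (S \<Otimes>\<^sub>M T)" and B: "\<And>z. \<bar>f z\<bar> \<le> B"
  shows "(\<integral>\<omega>. f (X \<omega>, Y \<omega>) \<partial>M) = (\<integral>\<omega>. (\<integral>\<omega>'. f (X \<omega>, Y \<omega>') \<partial>M) \<partial>M)"
proof -
  interpret prob_space M by fact
  have rvX: "X \<in> measurable M S" using ind by (rule indep_var_rv1)
  have rvY: "Y \<in> measurable M T" using ind by (rule indep_var_rv2)
  have eq: "distr M S X \<Otimes>\<^sub>M distr M T Y = distr M (S \<Otimes>\<^sub>M T) (\<lambda>x. (X x, Y x))"
    using ind indep_var_distribution_eq by blast
  interpret PX: prob_space "distr M S X" by (rule prob_space_distr) fact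
  interpret PY: prob_space "distr M T Y" by (rule prob_space_distr) fact
  interpret P: pair_prob_space "distr M S X" "distr M T Y" ..
  have fm: "f \<in> borel_measurable (distr M S X \<Otimes>\<^sub>M distr M T Y)"
    using f by (simp add: measurable_cong_sets[OF sets_pair_measure_cong[OF sets_distr sets_distr] refl])
  have int: "integrable (distr M S X \<Otimes>\<^sub>M distr M T Y) f"
    by (rule P.integrable_const_bound[where B=B]) (use B fm in auto)
  have gm: "(\<lambda>x. \<integral>y. f (x, y) \<partial>distr M T Y) \<in> borel_measurable (distr M S X)"
    using fm by (intro PY.borel_measurable_lebesgue_integral) simp
  have fx: "(\<lambda>y. f (x, y)) \<in> borel_measurable T" if "x \<in> space S" for x
    using f that by measurable
  have "(\<integral>\<omega>. f (X \<omega>, Y \<omega>) \<partial>M) = integral\<^sup>L (distr M (S \<Otimes>\<^sub>M T) (\<lambda>x. (X x, Y x))) f"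
    using rvX rvY f by (subst integral_distr) (auto intro: measurable_Pair)
  also have "\<dots> = integral\<^sup>L (distr M S X \<Otimes>\<^sub>M distr M T Y) f" by (simp add: eq)
  also have "\<dots> = (\<integral>x. (\<integral>y. f (x, y) \<partial>distr M T Y) \<partial>distr M S X)"
    using P.integral_fst'[OF int] by simp
  also have "\<dots> = (\<integral>\<omega>. (\<integral>y. f (X \<omega>, y) \<partial>distr M T Y) \<partial>M)"
    using gm rvX by (subst integral_distr) (auto simp: measurable_cong_sets[OF sets_distr])
  also have "\<dots> = (\<integral>\<omega>. (\<integral>\<omega>'. f (X \<omega>, Y \<omega>') \<partial>M) \<partial>M)"
  proof (rule Bochner_Integration.integral_cong[OF refl])
    fix \<omega> assume "\<omega> \<in> space M"
    then have "X \<omega> \<in> space S" using measurable_space[OF rvX] by blast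
    then show "(\<integral>y. f (X \<omega>, y) \<partial>distr M T Y) = (\<integral>\<omega>'. f (X \<omega>, Y \<omega>') \<partial>M)"
      using rvY fx by (subst integral_distr) auto
  qed
  finally show ?thesis .
qed

lemma gen_sets_Pow: "gen_sets M X \<subseteq> Pow (space M)"
  unfolding gen_sets_def by auto

lemma gen_sets_sets: "X \<in> borel_measurable M \<Longrightarrow> gen_sets M X \<subseteq> sets M"
  unfolding gen_sets_def by (auto intro: measurable_sets)

lemma meas_of_gen:
  assumes "space N = space M" "gen_sets M X \<subseteq> sets N"
  shows "X \<in> borel_measurable N"
proof (rule measurableI)
  fix A :: "'b set" assume "A \<in> sets borel"
  then show "X -` A \<inter> space N \<in> sets N" using assms unfolding gen_sets_def by auto
qed simp

lemma sign_measurable[measurable]: "sign \<in> borel_measurable borel"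
  unfolding sign_def[abs_def] by measurable

lemma sign_measurable'[measurable (raw)]:
  "f \<in> borel_measurable M \<Longrightarrow> (\<lambda>x. sign (f x)) \<in> borel_measurable M"
  using measurable_compose[OF _ sign_measurable] by blast

lemma meas_sub:
  assumes "space F = space G" "sets F \<subseteq> sets G" "f \<in> measurable F N"
  shows "f \<in> measurable G N"
  using assms unfolding measurable_def by auto

lemma space_filt: "space (filt M a eps k) = space M"
  unfolding filt_def by (simp add: space_measure_of_conv)

lemma sets_filt: "sets (filt M a eps k) = sigma_sets (space M) (\<Union>j\<in>{..<k}. gen_sets M (a j) \<union> gen_sets M (eps j))"
  unfolding filt_def by (intro sets_measure_of) (auto simp: gen_sets_def)

lemma sgd_iter_meas:
  assumes "\<And>j. j < k \<Longrightarrow> a j \<in> borel_measurable N" "\<And>j. j < k \<Longrightarrow> y j \<in> borel_measurable N"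
  shows "j \<le> k \<Longrightarrow> sgd_iter G lam a y j \<in> borel_measurable N"
proof (induction j)
  case 0 then show ?case by simp
next
  case (Suc j)
  then have [measurable]: "sgd_iter G lam a y j \<in> borel_measurable N" "a j \<in> borel_measurable N" "y j \<in> borel_measurable N"
    using assms by auto
  show ?case by simp measurable
qed

lemma gen_sets_sets':
  assumes "space N = space M" "X \<in> borel_measurable N"
  shows "gen_sets M X \<subseteq> sets N"
  using assms measurable_sets[OF assms(2)] unfolding gen_sets_def by auto

lemma indep_set_sym:
  assumes "prob_space M" "prob_space.indep_set M A B"
  shows "prob_space.indep_set M B A"
proof -
  interpret prob_space M by fact
  show ?thesis using assms(2) unfolding indep_sets2_eq by (metis Int_commute mult.commute)
qed



lemma sqrt2_ge: "(707/500) \<le> sqrt (2::real)"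
  by (rule real_le_rsqrt) (simp add: power2_eq_square)

lemma numeric_bound:
  fixes L s w :: real
  assumes L1: "1 < L" and Lhi: "L \<le> 1 + s\<^sup>2 / 9" and Lhi2: "1 + s\<^sup>2 / 9 < 50 / 49"
    and s0: "0 \<le> s" and w1: "1 / (2 * (L - 1)) \<le> w" and w2: "w < 3 / (2 * (L - 1))"
    and c_def: "c = 1 / (8 * L) * (sqrt 2 * L * s - sqrt (L - 1) * (3 / 2 + L))"
    and \<eta>_def: "\<eta> = c * sqrt (L - 1)"
  shows "0 \<le> \<eta>" "2 * \<eta> * L * sqrt w \<le> 1 / 5"
    "exp (\<eta> * ((L - 1) * w + L)) * (1 + 5 / 2 * \<eta>\<^sup>2 * L\<^sup>2 * w - 2 * \<eta> * L * s * sqrt w)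
       \<le> 1 - s\<^sup>2 / 60"
proof -
  define m where "m = L - 1"
  define sm where "sm = sqrt m"
  have m0: "0 < m" using L1 m_def by simp
  have sm0: "0 < sm" using m0 sm_def by simp
  have smsq: "sm\<^sup>2 = m" using m0 sm_def by simp
  have mle: "m \<le> s\<^sup>2 / 9" using Lhi m_def by simp
  have smle: "sm \<le> s / 3"
  proof -
    have "sm \<le> sqrt (s\<^sup>2 / 9)" unfolding sm_def using mle by (rule real_sqrt_le_mono)
    also have "\<dots> = s / 3" using s0 by (simp add: real_sqrt_divide)
    finally show ?thesis .
  qed
  have s2: "s\<^sup>2 < 9 / 49" using Lhi2 by simp
  have Llt: "L < 50 / 49" using Lhi Lhi2 by simp
  define r where "r = sqrt (m * w)"
  have w1': "1 / (2 * m) \<le> w" using w1 m_def by simp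
  have w2': "w < 3 / (2 * m)" using w2 m_def by simp
  have mw1: "1 / 2 \<le> m * w" using w1' m0 by (simp add: field_simps)
  have mw2: "m * w < 3 / 2" using w2' m0 by (simp add: field_simps)
  have w0: "0 < w" using mw1 m0 by (metis less_le_not_le mult_nonneg_nonpos not_less order_less_le_trans zero_less_divide_1_iff zero_less_numeral)
  have r0: "0 \<le> r" using r_def mw1 by simp
  have rsq: "r\<^sup>2 = m * w" using r_def mw1 by simp
  have rw: "sm * sqrt w = r" using r_def sm_def by (simp add: real_sqrt_mult)
  have c8: "8 * L * c = sqrt 2 * L * s - sm * (3 / 2 + L)"
    using c_def L1 m_def sm_def by simp
  have sq2: "(707/500) \<le> sqrt (2::real)" by (rule sqrt2_ge)
  have c8lo: "8 * L * c \<ge> (29/50) * s"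
  proof -
    have "sm * (3 / 2 + L) \<le> s / 3 * (3 / 2 + L)" using smle L1 by (intro mult_right_mono) auto
    moreover have "(707/500) * L * s \<le> sqrt 2 * L * s" using sq2 L1 s0 by (intro mult_right_mono) auto
    moreover have "(29/50) * s \<le> (707/500) * L * s - s / 3 * (3 / 2 + L)"
    proof -
      have "(29/50) * s \<le> ((707/500) * L - 1/3 * L - 1/2) * s" using L1 s0 by (intro mult_right_mono) auto
      then show ?thesis by (simp add: algebra_simps)
    qed
    ultimately show ?thesis using c8 by linarith
  qed
  have c0: "0 \<le> c"
  proof -
    have "0 \<le> 8 * L * c" using c8lo s0 by linarith
    then show ?thesis using L1 by (simp add: zero_le_mult_iff)
  qed
  have c8hi: "8 * L * c \<le> sqrt 2 * L * s" using c8 sm0 L1 by (simp add: mult_nonneg_nonneg)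
  have eta_sm: "\<eta> = c * sm" using \<eta>_def sm_def m_def by simp
  show \<eta>0: "0 \<le> \<eta>" using eta_sm c0 sm0 by simp
  have T: "2 * \<eta> * L * sqrt w = 2 * c * L * r"
    using eta_sm rw by (simp add: algebra_simps)
  have "(2 * c * L * r)\<^sup>2 \<le> (1/5)\<^sup>2"
  proof -
    have "(8 * L * c)\<^sup>2 \<le> (sqrt 2 * L * s)\<^sup>2" using c8hi c0 L1 by (intro power_mono) auto
    then have a: "(8 * L * c)\<^sup>2 \<le> 2 * L\<^sup>2 * s\<^sup>2" by (simp add: power_mult_distrib)
    have "(2 * c * L * r)\<^sup>2 = (8 * L * c)\<^sup>2 * r\<^sup>2 / 16" by (simp add: power_mult_distrib)
    also have "\<dots> \<le> (2 * L\<^sup>2 * s\<^sup>2) * (3/2) / 16" using a rsq mw2 mw1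
      by (intro divide_right_mono mult_mono) auto
    also have "\<dots> = 3 / 16 * L\<^sup>2 * s\<^sup>2" by simp
    also have "\<dots> \<le> 3 / 16 * (50/49)\<^sup>2 * (9/49)"
      using Llt s2 L1 by (intro mult_mono power_mono) auto
    also have "\<dots> \<le> (1/5)\<^sup>2" by (simp add: power2_eq_square)
    finally show ?thesis .
  qed
  then show "2 * \<eta> * L * sqrt w \<le> 1 / 5" unfolding T
    by (rule power2_le_imp_le) simp
  have e1: "\<eta> * ((L - 1) * w + L) = c * sm * (r\<^sup>2 + L)"
  proof -
    have "(L - 1) * w = r\<^sup>2" using rsq m_def by simp
    then show ?thesis by (simp add: eta_sm)
  qed
  have b1: "1 + 5 / 2 * \<eta>\<^sup>2 * L\<^sup>2 * w - 2 * \<eta> * L * s * sqrt w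
      = 1 + 5 / 2 * c\<^sup>2 * L\<^sup>2 * r\<^sup>2 - 2 * c * L * s * r"
  proof -
    have h1: "\<eta>\<^sup>2 * w = c\<^sup>2 * r\<^sup>2" using eta_sm rsq smsq by (simp add: power_mult_distrib)
    have h2: "\<eta> * sqrt w = c * r" using eta_sm rw by (simp add: algebra_simps)
    have "5 / 2 * \<eta>\<^sup>2 * L\<^sup>2 * w = 5 / 2 * L\<^sup>2 * (\<eta>\<^sup>2 * w)" by (simp add: algebra_simps)
    also have "\<dots> = 5 / 2 * c\<^sup>2 * L\<^sup>2 * r\<^sup>2" unfolding h1 by (simp add: algebra_simps)
    finally have e1: "5 / 2 * \<eta>\<^sup>2 * L\<^sup>2 * w = 5 / 2 * c\<^sup>2 * L\<^sup>2 * r\<^sup>2" .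
    have "2 * \<eta> * L * s * sqrt w = 2 * L * s * (\<eta> * sqrt w)" by (simp add: algebra_simps)
    also have "\<dots> = 2 * c * L * s * r" unfolding h2 by (simp add: algebra_simps)
    finally have e2: "2 * \<eta> * L * s * sqrt w = 2 * c * L * s * r" .
    show ?thesis unfolding e1 e2 ..
  qed
  define \<Phi> where "\<Phi> = c * sm * (r\<^sup>2 + L) + (5 / 2 * c\<^sup>2 * L\<^sup>2 * r\<^sup>2 - 2 * c * L * s * r)"
  have step1: "exp (c * sm * (r\<^sup>2 + L)) * (1 + 5 / 2 * c\<^sup>2 * L\<^sup>2 * r\<^sup>2 - 2 * c * L * s * r) \<le> exp \<Phi>"
  proof -
    have h: "1 + 5 / 2 * c\<^sup>2 * L\<^sup>2 * r\<^sup>2 - 2 * c * L * s * r \<le> exp (5 / 2 * c\<^sup>2 * L\<^sup>2 * r\<^sup>2 - 2 * c * L * s * r)"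
      using exp_ge_add_one_self[of "5 / 2 * c\<^sup>2 * L\<^sup>2 * r\<^sup>2 - 2 * c * L * s * r"] by linarith
    have "exp (c * sm * (r\<^sup>2 + L)) * (1 + 5 / 2 * c\<^sup>2 * L\<^sup>2 * r\<^sup>2 - 2 * c * L * s * r)
        \<le> exp (c * sm * (r\<^sup>2 + L)) * exp (5 / 2 * c\<^sup>2 * L\<^sup>2 * r\<^sup>2 - 2 * c * L * s * r)"
      using h by (intro mult_left_mono) auto
    then show ?thesis unfolding \<Phi>_def by (simp add: exp_add)
  qed
  have r1: "sqrt 2 \<le> 2 * r"
  proof -
    have "(sqrt 2)\<^sup>2 \<le> (2 * r)\<^sup>2" using rsq mw1 by (simp add: power_mult_distrib)
    then show ?thesis by (rule power2_le_imp_le) (use r0 in simp)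
  qed
  have Phi_le: "\<Phi> \<le> - (c\<^sup>2 * L * (8 - 15 * L / 4))"
  proof -
    have a: "c * sm * r\<^sup>2 \<le> c * sm * (3/2)" using rsq mw2 c0 sm0 by (intro mult_left_mono) auto
    have b: "5 / 2 * c\<^sup>2 * L\<^sup>2 * r\<^sup>2 \<le> 5 / 2 * c\<^sup>2 * L\<^sup>2 * (3/2)" using rsq mw2 by (intro mult_left_mono) auto
    have cc: "c * L * s * sqrt 2 \<le> c * L * s * (2 * r)" using r1 c0 L1 s0 by (intro mult_left_mono) auto
    have d: "c * (8 * L * c) = sqrt 2 * c * L * s - c * sm * (3/2 + L)"
      unfolding c8 by (simp add: algebra_simps)
    have "\<Phi> \<le> c * sm * (3/2 + L) + 15 / 4 * c\<^sup>2 * L\<^sup>2 - sqrt 2 * c * L * s"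
      unfolding \<Phi>_def using a b cc by (simp add: algebra_simps)
    also have "\<dots> = - (c\<^sup>2 * L * (8 - 15 * L / 4))"
      using d by (simp add: algebra_simps power2_eq_square)
    finally show ?thesis .
  qed
  have Phi2: "\<Phi> \<le> - (s\<^sup>2 / 50)"
  proof -
    have "4 * L * c\<^sup>2 \<le> c\<^sup>2 * L * (8 - 15 * L / 4)"
    proof -
      have "4 \<le> 8 - 15 * L / 4" using Llt by simp
      then have "c\<^sup>2 * L * 4 \<le> c\<^sup>2 * L * (8 - 15 * L / 4)" using L1 by (intro mult_left_mono) auto
      then show ?thesis by (simp add: algebra_simps)
    qed
    moreover have "s\<^sup>2 / 50 \<le> 4 * L * c\<^sup>2"
    proof -
      have "((29/50) * s)\<^sup>2 \<le> (8 * L * c)\<^sup>2" using c8lo s0 by (intro power_mono) auto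
      then have a: "(841/2500) * s\<^sup>2 \<le> 64 * L\<^sup>2 * c\<^sup>2" by (simp add: power_mult_distrib power_divide)
      have "s\<^sup>2 / 50 * (16 * L) \<le> s\<^sup>2 / 50 * (16 * 50 / 49)" using Llt by (intro mult_left_mono) auto
      also have "\<dots> \<le> (841/2500) * s\<^sup>2" by simp
      also have "\<dots> \<le> 64 * L\<^sup>2 * c\<^sup>2" by (rule a)
      also have "\<dots> = (4 * L * c\<^sup>2) * (16 * L)" by (simp add: power2_eq_square)
      finally show ?thesis using L1 by (simp add: mult_le_cancel_right)
    qed
    ultimately show ?thesis using Phi_le by linarith
  qed
  have fin: "exp (- (s\<^sup>2 / 50)) \<le> 1 - s\<^sup>2 / 60"
  proof -
    have "exp (- (s\<^sup>2 / 50)) * (1 + s\<^sup>2 / 50) \<le> 1"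
      using exp_ge_add_one_self[of "s\<^sup>2 / 50"] by (simp add: exp_minus field_simps)
    moreover have "0 < 1 + s\<^sup>2 / 50" by (simp add: add_pos_nonneg)
    ultimately have "exp (- (s\<^sup>2 / 50)) \<le> 1 / (1 + s\<^sup>2 / 50)" by (simp add: pos_le_divide_eq)
    also have "\<dots> \<le> 1 - s\<^sup>2 / 60"
    proof -
      have "1 \<le> (1 - s\<^sup>2 / 60) * (1 + s\<^sup>2 / 50)"
      proof -
        have "s\<^sup>2 * s\<^sup>2 \<le> 10 * s\<^sup>2" using s2 by (intro mult_right_mono) auto
        then show ?thesis by (simp add: algebra_simps)
      qed
      moreover have "0 < 1 + s\<^sup>2 / 50" by (simp add: add_pos_nonneg)
      ultimately show ?thesis by (simp add: divide_le_eq)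
    qed
    finally show ?thesis .
  qed
  show "exp (\<eta> * ((L - 1) * w + L)) * (1 + 5 / 2 * \<eta>\<^sup>2 * L\<^sup>2 * w - 2 * \<eta> * L * s * sqrt w)
       \<le> 1 - s\<^sup>2 / 60"
    unfolding e1 b1 using step1 Phi2 fin by (smt (verit) exp_le_cancel_iff)
qed

lemma exp_quad_bound:
  fixes \<tau> :: real
  assumes "\<bar>\<tau>\<bar> \<le> 1 / 5"
  shows "exp \<tau> \<le> 1 + \<tau> + 5 / 8 * \<tau>\<^sup>2"
proof -
  obtain t where t: "\<bar>t\<bar> \<le> \<bar>\<tau>\<bar>" and e: "exp \<tau> = (\<Sum>m<2. \<tau> ^ m / fact m) + exp t / fact 2 * \<tau> ^ 2"
    using Maclaurin_exp_le[of \<tau> 2] by blast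
  have s: "(\<Sum>m<2. \<tau> ^ m / fact m) = 1 + \<tau>" by (simp add: numeral_2_eq_2)
  have t5: "t \<le> 1 / 5" using t assms by linarith
  have "exp (- t) \<ge> 1 - t" using exp_ge_add_one_self[of "- t"] by simp
  then have "exp t * (1 - t) \<le> exp t * exp (- t)" by (intro mult_left_mono) auto
  then have a: "exp t * (1 - t) \<le> 1" by (simp add: exp_minus_inverse)
  have "exp t * (4 / 5) \<le> exp t * (1 - t)" using t5 by (intro mult_left_mono) auto
  then have "exp t * (4 / 5) \<le> 1" using a by linarith
  then have "exp t \<le> 5 / 4" by simp
  then have "exp t / fact 2 * \<tau> ^ 2 \<le> 5 / 4 / 2 * \<tau> ^ 2"
    by (intro mult_right_mono) (auto simp: fact_numeral)
  then show ?thesis using e s by simp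
qed



theorem lemma4p1:
  fixes M :: "'a measure"
    and x :: "real^'n"
    and a :: "nat \<Rightarrow> 'a \<Rightarrow> real^'n"
    and \<xi> \<nu> :: "nat \<Rightarrow> 'a \<Rightarrow> real"
    and p G lam Ct :: real
  defines "d \<equiv> real CARD('n)"
  defines "eps \<equiv> (\<lambda>k \<omega>. \<xi> k \<omega> * \<nu> k \<omega>)"
  defines "y \<equiv> (\<lambda>k \<omega>. x \<bullet> a k \<omega> + eps k \<omega>)"
  defines "F \<equiv> filt M a eps"
  defines "Y \<equiv> (\<lambda>k \<omega>. (norm ((lam ^ k / G) *\<^sub>R (x - sgd_iter G lam a y k \<omega>)))\<^sup>2)"
  defines "alo \<equiv> 1 / (2 * (lam\<^sup>2 - 1))"
  defines "bhi \<equiv> 3 / (2 * (lam\<^sup>2 - 1))"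
  defines "cstar \<equiv> 1 / (8 * lam\<^sup>2) *
            (sqrt 2 * lam\<^sup>2 * (1 - 2 * p) * Ct / sqrt d - sqrt (lam\<^sup>2 - 1) * (3 / 2 + lam\<^sup>2))"
  defines "\<eta> \<equiv> cstar * sqrt (lam\<^sup>2 - 1)"
  assumes M: "prob_space M"
    and p: "0 \<le> p" "p < 1 / 2"
    and G: "G > 0" and lam: "lam > 0" and Ct: "Ct > 0"
    and a_meas: "\<And>k. a k \<in> borel_measurable M"
    and \<xi>_meas: "\<And>k. \<xi> k \<in> borel_measurable M"
    and \<nu>_meas: "\<And>k. \<nu> k \<in> borel_measurable M"
    and \<xi>_ind: "\<And>k \<omega>. \<omega> \<in> space M \<Longrightarrow> \<xi> k \<omega> \<in> {0, 1}"
    and \<xi>_prob: "\<And>k. measure M {\<omega> \<in> space M. \<xi> k \<omega> = 1} = p"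
    and \<xi>_indep: "\<And>k. prob_space.indep_set M (sigma_sets (space M) (gen_sets M (\<xi> k)))
          (sigma_sets (space M) ((\<Union>j. gen_sets M (a j) \<union> gen_sets M (\<nu> j))
                                 \<union> (\<Union>j\<in>UNIV - {k}. gen_sets M (\<xi> j))))"
    and a_unit: "\<And>k \<omega>. \<omega> \<in> space M \<Longrightarrow> norm (a k \<omega>) = 1"
    and a_indep_F: "\<And>k. prob_space.indep_set M (sigma_sets (space M) (gen_sets M (a k))) (sets (F k))"
    and a_iid_indep: "prob_space.indep_vars M (\<lambda>_. borel) (\<lambda>k \<omega>. sqrt d *\<^sub>R a k \<omega>) UNIV"
    and a_iid_dist: "\<And>k. distr M borel (\<lambda>\<omega>. sqrt d *\<^sub>R a k \<omega>) = distr M borel (\<lambda>\<omega>. sqrt d *\<^sub>R a 0 \<omega>)"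
    and a_mean: "\<And>k. integral\<^sup>L M (\<lambda>\<omega>. sqrt d *\<^sub>R a k \<omega>) = 0"
    and a_iso: "\<And>k i j. integral\<^sup>L M (\<lambda>\<omega>. (sqrt d *\<^sub>R a k \<omega>) $ i * (sqrt d *\<^sub>R a k \<omega>) $ j)
                        = (if i = j then 1 else 0)"
    and small_ball: "\<And>k (u :: 'a \<Rightarrow> real^'n). u \<in> borel_measurable (F k) \<Longrightarrow>
          AE \<omega> in M. (\<integral>v. \<bar>u \<omega> \<bullet> v\<bar> \<partial>(distr M borel (a k))) \<ge> Ct * norm (u \<omega>) / sqrt d"
    and lam_lo: "1 < lam\<^sup>2"
    and lam_hi: "lam\<^sup>2 \<le> 1 + Ct\<^sup>2 * (1 - 2 * p)\<^sup>2 / (9 * d)"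
    and lam_hi2: "1 + Ct\<^sup>2 * (1 - 2 * p)\<^sup>2 / (9 * d) < 50 / 49"
  shows "AE \<omega> in M.
           real_cond_exp M (F k)
             (\<lambda>\<omega>. exp (\<eta> * (Y (Suc k) \<omega> - Y k \<omega>)) * indicator {\<omega>. alo \<le> Y k \<omega> \<and> Y k \<omega> < bhi} \<omega>) \<omega>
           \<le> 1 - Ct\<^sup>2 * (1 - 2 * p)\<^sup>2 / (60 * d)"
proof -
  interpret prob_space M by (rule M)
  have d_pos: "0 < d" unfolding d_def by simp
  have eps_meas[measurable]: "eps j \<in> borel_measurable M" for j
    unfolding eps_def using \<xi>_meas \<nu>_meas by measurable
  note a_meas[measurable] \<xi>_meas[measurable] \<nu>_meas[measurable]
  have spF: "space (F k) = space M" unfolding F_def by (rule space_filt)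
  have setsF: "sets (F k) = sigma_sets (space M) (\<Union>j\<in>{..<k}. gen_sets M (a j) \<union> gen_sets M (eps j))"
    unfolding F_def by (rule sets_filt)
  have genF: "(\<Union>j\<in>{..<k}. gen_sets M (a j) \<union> gen_sets M (eps j)) \<subseteq> sets (F k)"
    unfolding setsF by auto
  have subalg: "subalgebra M (F k)"
    unfolding subalgebra_def
  proof
    show "space (F k) = space M" by (rule spF)
    have "(\<Union>j\<in>{..<k}. gen_sets M (a j) \<union> gen_sets M (eps j)) \<subseteq> sets M"
      using gen_sets_sets[OF a_meas] gen_sets_sets[OF eps_meas] by blast
    then show "sets (F k) \<subseteq> sets M" unfolding setsF by (rule sets.sigma_sets_subset)
  qed
  have "finite_measure_subalgebra M (F k)"
    unfolding finite_measure_subalgebra_def finite_measure_subalgebra_axioms_def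
    using subalg finite_measure_axioms by simp
  then interpret sigma_finite_subalgebra M "F k"
    by (rule finite_measure_subalgebra_is_sigma_finite)
  have aF: "a j \<in> borel_measurable (F k)" if "j < k" for j
    using genF that by (intro meas_of_gen[OF spF]) auto
  have epsF: "eps j \<in> borel_measurable (F k)" if "j < k" for j
    using genF that by (intro meas_of_gen[OF spF]) auto
  have yF: "y j \<in> borel_measurable (F k)" if "j < k" for j
    unfolding y_def using aF[OF that] epsF[OF that] by measurable
  have xkF[measurable]: "sgd_iter G lam a y k \<in> borel_measurable (F k)"
    by (rule sgd_iter_meas[where k=k and N="F k" and j=k, OF aF yF]) auto
  define L where "L = lam\<^sup>2"
  define u where "u = (\<lambda>\<omega>. (lam ^ k / G) *\<^sub>R (x - sgd_iter G lam a y k \<omega>))"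
  define W where "W = (\<lambda>\<omega>. (norm (u \<omega>))\<^sup>2)"
  have YkW: "Y k = W" unfolding Y_def W_def u_def by (rule refl)
  define Ev where "Ev = {\<omega>. alo \<le> W \<omega> \<and> W \<omega> < bhi}"
  define V where "V = (\<lambda>\<omega>. if alo \<le> W \<omega> \<and> W \<omega> < bhi then u \<omega> else 0)"
  define ex where "ex = (\<lambda>\<omega>. exp (\<eta> * ((L - 1) * W \<omega> + L)))"
  define P where "P = (\<lambda>\<omega>. indicator Ev \<omega> * ex \<omega> * (1 + 5 / 2 * \<eta>\<^sup>2 * L\<^sup>2 * W \<omega>))"
  define Q where "Q = (\<lambda>\<omega>. indicator Ev \<omega> * ex \<omega> * (2 * \<eta> * L))"
  define h where "h = (\<lambda>\<omega>. (2 * \<xi> k \<omega> - 1) * \<bar>V \<omega> \<bullet> a k \<omega>\<bar>)"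
  define f where "f = (\<lambda>\<omega>. exp (\<eta> * (Y (Suc k) \<omega> - Y k \<omega>)) * indicator {\<omega>. alo \<le> Y k \<omega> \<and> Y k \<omega> < bhi} \<omega>)"
  define I where "I = (\<lambda>\<omega>. \<integral>v. \<bar>V \<omega> \<bullet> v\<bar> \<partial>(distr M borel (a k)))"
  define s where "s = (1 - 2 * p) * Ct / sqrt d"
  define R where "R = sqrt bhi"
  have uF[measurable]: "u \<in> borel_measurable (F k)" unfolding u_def by measurable
  have WF[measurable]: "W \<in> borel_measurable (F k)" unfolding W_def by measurable
  have EvF[measurable]: "Ev \<inter> space M \<in> sets (F k)"
  proof -
    have "{\<omega> \<in> space (F k). alo \<le> W \<omega> \<and> W \<omega> < bhi} \<in> sets (F k)" by measurable
    moreover have "{\<omega> \<in> space (F k). alo \<le> W \<omega> \<and> W \<omega> < bhi} = Ev \<inter> space M"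
      unfolding Ev_def spF by blast
    ultimately show ?thesis by simp
  qed
  have L1: "1 < L" using lam_lo L_def by simp
  have lam1: "lam ^ k > 0" using lam by simp
  have alo_pos: "0 < alo" unfolding alo_def using lam_lo by simp
  have bhi_pos: "0 < bhi" unfolding bhi_def using lam_lo by simp
  have p12: "0 < 1 - 2 * p" using p by simp
  have s0: "0 \<le> s" unfolding s_def using p12 Ct d_pos by simp
  have s2: "s\<^sup>2 = Ct\<^sup>2 * (1 - 2 * p)\<^sup>2 / d"
    unfolding s_def using d_pos by (simp add: power_divide power_mult_distrib mult.commute)
  have Lhi: "L \<le> 1 + s\<^sup>2 / 9" using lam_hi unfolding s2 L_def by (simp add: field_simps)
  have Lhi2: "1 + s\<^sup>2 / 9 < 50 / 49" using lam_hi2 unfolding s2 by (simp add: field_simps)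
  have cdef: "cstar = 1 / (8 * L) * (sqrt 2 * L * s - sqrt (L - 1) * (3 / 2 + L))"
    unfolding cstar_def L_def s_def by simp
  have edef: "\<eta> = cstar * sqrt (L - 1)" unfolding \<eta>_def L_def by simp
  have alo_eq: "alo = 1 / (2 * (L - 1))" unfolding alo_def L_def ..
  have bhi_eq: "bhi = 3 / (2 * (L - 1))" unfolding bhi_def L_def ..
  have alo_bhi: "alo < bhi" unfolding alo_eq bhi_eq using L1 by (simp add: divide_strict_right_mono)
  note NB = numeric_bound[OF L1 Lhi Lhi2 s0 _ _ cdef edef]
  have eta0: "0 \<le> \<eta>" using NB(1)[of alo] alo_eq bhi_eq alo_bhi by simp
  have pw: "f \<omega> \<le> P \<omega> + Q \<omega> * h \<omega>" if om: "\<omega> \<in> space M" for \<omega>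
  proof (cases "\<omega> \<in> Ev")
    case False
    then have "f \<omega> = 0" "P \<omega> = 0" "Q \<omega> = 0"
      unfolding f_def P_def Q_def YkW Ev_def by auto
    then show ?thesis by simp
  next
    case True
    then have Wlo: "alo \<le> W \<omega>" and Whi: "W \<omega> < bhi" unfolding Ev_def by auto
    have VE: "V \<omega> = u \<omega>" unfolding V_def using Wlo Whi by simp
    have fE: "f \<omega> = exp (\<eta> * (Y (Suc k) \<omega> - W \<omega>))"
      unfolding f_def YkW using Wlo Whi by simp
    have PE: "P \<omega> = ex \<omega> * (1 + 5 / 2 * \<eta>\<^sup>2 * L\<^sup>2 * W \<omega>)" unfolding P_def using True by simp
    have QE: "Q \<omega> = ex \<omega> * (2 * \<eta> * L)" unfolding Q_def using True by simp
    define xk where "xk = sgd_iter G lam a y k \<omega>"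
    define \<sigma> where "\<sigma> = sign (y k \<omega> - xk \<bullet> a k \<omega>)"
    define Z where "Z = u \<omega> \<bullet> a k \<omega>"
    have hE: "h \<omega> = (2 * \<xi> k \<omega> - 1) * \<bar>Z\<bar>" unfolding h_def Z_def VE ..
    have an: "norm (a k \<omega>) = 1" using a_unit om by simp
    have sig2: "\<sigma> * \<sigma> = 1" unfolding \<sigma>_def sign_def by simp
    have vec: "(lam ^ Suc k / G) *\<^sub>R (x - sgd_iter G lam a y (Suc k) \<omega>) = lam *\<^sub>R (u \<omega> - \<sigma> *\<^sub>R a k \<omega>)"
    proof -
      have e1: "sgd_iter G lam a y (Suc k) \<omega> = xk + (G / lam ^ k * \<sigma>) *\<^sub>R a k \<omega>"
        unfolding xk_def \<sigma>_def by simp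
      have e2: "(lam ^ Suc k / G) * (G / lam ^ k * \<sigma>) = lam * \<sigma>"
        using G lam1 by (simp add: field_simps)
      have e3: "(lam ^ Suc k / G) *\<^sub>R (x - xk) = lam *\<^sub>R u \<omega>"
        unfolding u_def xk_def by (simp add: mult.assoc)
      have "(lam ^ Suc k / G) *\<^sub>R (x - sgd_iter G lam a y (Suc k) \<omega>)
          = (lam ^ Suc k / G) *\<^sub>R (x - xk) - ((lam ^ Suc k / G) * (G / lam ^ k * \<sigma>)) *\<^sub>R a k \<omega>"
        unfolding e1 by (simp add: scaleR_diff_right algebra_simps)
      also have "\<dots> = lam *\<^sub>R (u \<omega> - \<sigma> *\<^sub>R a k \<omega>)"
        unfolding e2 e3 by (simp add: scaleR_diff_right)
      finally show ?thesis .
    qed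
    have Ysuc: "Y (Suc k) \<omega> = L * (W \<omega> - 2 * \<sigma> * Z + 1)"
    proof -
      have "Y (Suc k) \<omega> = (norm (lam *\<^sub>R (u \<omega> - \<sigma> *\<^sub>R a k \<omega>)))\<^sup>2"
        unfolding Y_def vec ..
      also have "\<dots> = lam\<^sup>2 * (norm (u \<omega> - \<sigma> *\<^sub>R a k \<omega>))\<^sup>2"
        by (simp add: power_mult_distrib)
      also have "(norm (u \<omega> - \<sigma> *\<^sub>R a k \<omega>))\<^sup>2 = W \<omega> - 2 * \<sigma> * Z + \<sigma> * \<sigma> * (norm (a k \<omega>))\<^sup>2"
        unfolding W_def Z_def power2_norm_eq_inner
        by (simp add: inner_diff_left inner_diff_right inner_commute algebra_simps)
      finally show ?thesis using sig2 an L_def by simp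
    qed
    have sZ: "- (\<sigma> * Z) \<le> (2 * \<xi> k \<omega> - 1) * \<bar>Z\<bar>"
    proof (cases "\<xi> k \<omega> = 0")
      case True
      then have "eps k \<omega> = 0" unfolding eps_def by simp
      then have "y k \<omega> - xk \<bullet> a k \<omega> = (x - xk) \<bullet> a k \<omega>"
        unfolding y_def by (simp add: inner_diff_left)
      moreover have "Z = (lam ^ k / G) * ((x - xk) \<bullet> a k \<omega>)"
        unfolding Z_def u_def xk_def by simp
      moreover have "0 < lam ^ k / G" using lam1 G by simp
      ultimately have "\<sigma> * Z = \<bar>Z\<bar>"
      proof -
        assume yE: "y k \<omega> - xk \<bullet> a k \<omega> = (x - xk) \<bullet> a k \<omega>"
          and Zc: "Z = (lam ^ k / G) * ((x - xk) \<bullet> a k \<omega>)" and cpos: "0 < lam ^ k / G"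
        show ?thesis
        proof (cases "0 \<le> (x - xk) \<bullet> a k \<omega>")
          case True
          then have "0 \<le> Z" unfolding Zc using cpos by (intro mult_nonneg_nonneg) auto
          moreover have "\<sigma> = 1" unfolding \<sigma>_def sign_def yE using True by simp
          ultimately show ?thesis by simp
        next
          case False
          then have "Z < 0" unfolding Zc using cpos by (intro mult_pos_neg) auto
          moreover have "\<sigma> = -1" unfolding \<sigma>_def sign_def yE using False by simp
          ultimately show ?thesis by simp
        qed
      qed
      then show ?thesis using True by simp
    next
      case False
      then have "\<xi> k \<omega> = 1" using \<xi>_ind[OF om, of k] by simp
      moreover have "- (\<sigma> * Z) \<le> \<bar>Z\<bar>" unfolding \<sigma>_def sign_def by auto
      ultimately show ?thesis by simp
    qed
    have nu: "norm (u \<omega>) = sqrt (W \<omega>)" unfolding W_def by simp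
    have Zb: "\<bar>Z\<bar> \<le> sqrt (W \<omega>)"
      using Cauchy_Schwarz_ineq2[of "u \<omega>" "a k \<omega>"] an nu unfolding Z_def by simp
    have Z2: "Z\<^sup>2 \<le> W \<omega>"
    proof -
      have "Z\<^sup>2 = \<bar>Z\<bar>\<^sup>2" by simp
      also have "\<dots> \<le> (sqrt (W \<omega>))\<^sup>2" using Zb by (intro power_mono) auto
      also have "\<dots> = W \<omega>" unfolding W_def by simp
      finally show ?thesis .
    qed
    have NBw: "2 * \<eta> * L * sqrt (W \<omega>) \<le> 1 / 5"
      using NB(2)[of "W \<omega>"] Wlo Whi alo_eq bhi_eq by simp
    define \<tau> where "\<tau> = 2 * \<eta> * L * ((2 * \<xi> k \<omega> - 1) * \<bar>Z\<bar>)"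
    have xi01: "\<bar>2 * \<xi> k \<omega> - 1\<bar> = 1" using \<xi>_ind[OF om, of k] by auto
    have tau_abs: "\<bar>\<tau>\<bar> = 2 * \<eta> * L * \<bar>Z\<bar>"
      unfolding \<tau>_def using eta0 L1 xi01 by (simp add: abs_mult)
    have tau_b: "\<bar>\<tau>\<bar> \<le> 1 / 5"
    proof -
      have "2 * \<eta> * L * \<bar>Z\<bar> \<le> 2 * \<eta> * L * sqrt (W \<omega>)"
        using Zb eta0 L1 by (intro mult_left_mono) auto
      then show ?thesis using tau_abs NBw by linarith
    qed
    have tau2: "\<tau>\<^sup>2 \<le> 4 * \<eta>\<^sup>2 * L\<^sup>2 * W \<omega>"
    proof -
      have "\<tau>\<^sup>2 = \<bar>\<tau>\<bar>\<^sup>2" by simp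
      also have "\<dots> = 4 * \<eta>\<^sup>2 * L\<^sup>2 * Z\<^sup>2" unfolding tau_abs by (simp add: power_mult_distrib)
      also have "\<dots> \<le> 4 * \<eta>\<^sup>2 * L\<^sup>2 * W \<omega>" using Z2 by (intro mult_left_mono) auto
      finally show ?thesis .
    qed
    have expo: "\<eta> * (Y (Suc k) \<omega> - W \<omega>) \<le> \<eta> * ((L - 1) * W \<omega> + L) + \<tau>"
    proof -
      have "\<eta> * (Y (Suc k) \<omega> - W \<omega>) = \<eta> * ((L - 1) * W \<omega> + L) + 2 * \<eta> * L * (- (\<sigma> * Z))"
        unfolding Ysuc by (simp add: algebra_simps)
      also have "\<dots> \<le> \<eta> * ((L - 1) * W \<omega> + L) + \<tau>"
      proof -
        have "2 * \<eta> * L * (- (\<sigma> * Z)) \<le> 2 * \<eta> * L * ((2 * \<xi> k \<omega> - 1) * \<bar>Z\<bar>)"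
          using sZ eta0 L1 by (intro mult_left_mono) auto
        then show ?thesis unfolding \<tau>_def by linarith
      qed
      finally show ?thesis .
    qed
    have "f \<omega> \<le> exp (\<eta> * ((L - 1) * W \<omega> + L) + \<tau>)" unfolding fE using expo by simp
    also have "\<dots> = ex \<omega> * exp \<tau>" unfolding ex_def by (simp add: exp_add)
    also have "\<dots> \<le> ex \<omega> * (1 + \<tau> + 5 / 8 * \<tau>\<^sup>2)"
      using exp_quad_bound[OF tau_b] unfolding ex_def by (intro mult_left_mono) auto
    also have "\<dots> \<le> ex \<omega> * (1 + \<tau> + 5 / 8 * (4 * \<eta>\<^sup>2 * L\<^sup>2 * W \<omega>))"
      using tau2 unfolding ex_def by (intro mult_left_mono) (linarith, simp)
    also have "\<dots> = P \<omega> + Q \<omega> * h \<omega>"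
      unfolding PE QE hE \<tau>_def by (simp add: algebra_simps)
    finally show ?thesis .
  qed
  define E0 where "E0 = exp (\<eta> * ((L - 1) * bhi + L))"
  define P0 where "P0 = E0 * (1 + 5 / 2 * \<eta>\<^sup>2 * L\<^sup>2 * bhi)"
  define Q0 where "Q0 = E0 * (2 * \<eta> * L)"
  have VF[measurable]: "V \<in> borel_measurable (F k)" unfolding V_def by measurable
  have VM[measurable]: "V \<in> borel_measurable M" using VF subalg by (rule measurable_from_subalg[rotated])
  have exF[measurable]: "ex \<in> borel_measurable (F k)" unfolding ex_def by measurable
  have Pif: "P = (\<lambda>\<omega>. if alo \<le> W \<omega> \<and> W \<omega> < bhi then ex \<omega> * (1 + 5 / 2 * \<eta>\<^sup>2 * L\<^sup>2 * W \<omega>) else 0)"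
    unfolding P_def Ev_def by (auto simp: fun_eq_iff)
  have Qif: "Q = (\<lambda>\<omega>. if alo \<le> W \<omega> \<and> W \<omega> < bhi then ex \<omega> * (2 * \<eta> * L) else 0)"
    unfolding Q_def Ev_def by (auto simp: fun_eq_iff)
  have PF[measurable]: "P \<in> borel_measurable (F k)" unfolding Pif by measurable
  have QF[measurable]: "Q \<in> borel_measurable (F k)" unfolding Qif by measurable
  have PM[measurable]: "P \<in> borel_measurable M" using PF subalg by (rule measurable_from_subalg[rotated])
  have QM[measurable]: "Q \<in> borel_measurable M" using QF subalg by (rule measurable_from_subalg[rotated])
  have hM[measurable]: "h \<in> borel_measurable M" unfolding h_def by measurable
  have xSk[measurable]: "sgd_iter G lam a y (Suc k) \<in> borel_measurable M"
    by (rule sgd_iter_meas[where k="Suc k" and N=M and j="Suc k"]) (auto simp: y_def)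
  have xk_M[measurable]: "sgd_iter G lam a y k \<in> borel_measurable M"
    by (rule sgd_iter_meas[where k="Suc k" and N=M and j="k"]) (auto simp: y_def)
  have fif: "f = (\<lambda>\<omega>. if alo \<le> Y k \<omega> \<and> Y k \<omega> < bhi then exp (\<eta> * (Y (Suc k) \<omega> - Y k \<omega>)) else 0)"
    unfolding f_def by (auto simp: fun_eq_iff)
  have fM[measurable]: "f \<in> borel_measurable M" unfolding fif Y_def by measurable
  have E0_pos: "0 < E0" unfolding E0_def by simp
  have exb: "0 < ex \<omega> \<and> ex \<omega> \<le> E0" if "W \<omega> < bhi" for \<omega>
  proof -
    have "\<eta> * ((L - 1) * W \<omega> + L) \<le> \<eta> * ((L - 1) * bhi + L)"
      using that eta0 L1 by (intro mult_left_mono) auto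
    then show ?thesis unfolding ex_def E0_def by simp
  qed
  have W0: "0 \<le> W \<omega>" for \<omega> unfolding W_def by simp
  have Vb: "norm (V \<omega>) \<le> R" for \<omega>
  proof (cases "alo \<le> W \<omega> \<and> W \<omega> < bhi")
    case True
    then have "norm (V \<omega>) = sqrt (W \<omega>)" unfolding V_def W_def by simp
    then show ?thesis unfolding R_def using True by simp
  next
    case False then have "V \<omega> = 0" unfolding V_def by auto
    then show ?thesis unfolding R_def using bhi_pos by simp
  qed
  have hb: "\<bar>h \<omega>\<bar> \<le> R" if "\<omega> \<in> space M" for \<omega>
  proof -
    have "\<bar>2 * \<xi> k \<omega> - 1\<bar> = 1" using \<xi>_ind[OF that, of k] by auto
    then have "\<bar>h \<omega>\<bar> = \<bar>V \<omega> \<bullet> a k \<omega>\<bar>" unfolding h_def by (simp add: abs_mult)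
    also have "\<dots> \<le> norm (V \<omega>) * norm (a k \<omega>)" by (rule Cauchy_Schwarz_ineq2)
    also have "\<dots> \<le> R" using Vb[of \<omega>] a_unit[OF that] by simp
    finally show ?thesis .
  qed
  have Pb: "0 \<le> P \<omega> \<and> P \<omega> \<le> P0" for \<omega>
  proof (cases "alo \<le> W \<omega> \<and> W \<omega> < bhi")
    case True
    have "1 + 5 / 2 * \<eta>\<^sup>2 * L\<^sup>2 * W \<omega> \<le> 1 + 5 / 2 * \<eta>\<^sup>2 * L\<^sup>2 * bhi"
    proof -
      have "5 / 2 * \<eta>\<^sup>2 * L\<^sup>2 * W \<omega> \<le> 5 / 2 * \<eta>\<^sup>2 * L\<^sup>2 * bhi"
        using True by (intro mult_left_mono) auto
      then show ?thesis by linarith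
    qed
    moreover have "0 \<le> 1 + 5 / 2 * \<eta>\<^sup>2 * L\<^sup>2 * W \<omega>" using W0[of \<omega>] by simp
    moreover have "P \<omega> = ex \<omega> * (1 + 5 / 2 * \<eta>\<^sup>2 * L\<^sup>2 * W \<omega>)" unfolding Pif using True by simp
    moreover have "0 < ex \<omega>" "ex \<omega> \<le> E0" using exb[of \<omega>] True by auto
    ultimately show ?thesis unfolding P0_def
      by (simp add: mult_mono del: mult_le_cancel_left_pos)
  next
    case False then have "P \<omega> = 0" unfolding Pif by auto
    moreover have "0 \<le> P0" unfolding P0_def using E0_pos bhi_pos by simp
    ultimately show ?thesis by simp
  qed
  have Qb: "0 \<le> Q \<omega> \<and> Q \<omega> \<le> Q0" for \<omega>
  proof (cases "alo \<le> W \<omega> \<and> W \<omega> < bhi")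
    case True
    then have "Q \<omega> = ex \<omega> * (2 * \<eta> * L)" unfolding Qif by simp
    moreover have "0 < ex \<omega>" "ex \<omega> \<le> E0" using exb[of \<omega>] True by auto
    moreover have "0 \<le> 2 * \<eta> * L" using eta0 L1 by simp
    ultimately show ?thesis unfolding Q0_def
      by (metis mult_right_mono mult_nonneg_nonneg less_imp_le)
  next
    case False then have "Q \<omega> = 0" unfolding Qif by auto
    moreover have "0 \<le> Q0" unfolding Q0_def using E0_pos eta0 L1 by simp
    ultimately show ?thesis by simp
  qed
  have f0: "0 \<le> f \<omega>" for \<omega> unfolding fif by simp
  have int_P: "integrable M P"
    by (rule integrable_const_bound[where B=P0]) (use Pb in auto)
  have int_h: "integrable M h"
    by (rule integrable_const_bound[where B=R]) (use hb in auto)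
  have int_Qh: "integrable M (\<lambda>\<omega>. Q \<omega> * h \<omega>)"
  proof (rule integrable_const_bound[where B="Q0 * R"])
    show "AE \<omega> in M. norm (Q \<omega> * h \<omega>) \<le> Q0 * R"
    proof (rule AE_I2)
      fix \<omega> assume "\<omega> \<in> space M"
      then have "\<bar>h \<omega>\<bar> \<le> R" by (rule hb)
      then show "norm (Q \<omega> * h \<omega>) \<le> Q0 * R" using Qb[of \<omega>]
        unfolding real_norm_def abs_mult by (intro mult_mono) auto
    qed
  qed simp
  have int_PQh: "integrable M (\<lambda>\<omega>. P \<omega> + Q \<omega> * h \<omega>)" using int_P int_Qh by simp
  have int_f: "integrable M f"
  proof (rule integrable_const_bound[where B="P0 + Q0 * R"])
    show "AE \<omega> in M. norm (f \<omega>) \<le> P0 + Q0 * R"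
    proof (rule AE_I2)
      fix \<omega> assume om: "\<omega> \<in> space M"
      have "\<bar>Q \<omega> * h \<omega>\<bar> \<le> Q0 * R" using Qb[of \<omega>] hb[OF om]
        unfolding abs_mult by (intro mult_mono) auto
      then have "Q \<omega> * h \<omega> \<le> Q0 * R" by linarith
      then show "norm (f \<omega>) \<le> P0 + Q0 * R" using pw[OF om] f0[of \<omega>] Pb[of \<omega>] by simp
    qed
  qed simp
  define g where "g = (\<lambda>\<omega>. (2 * p - 1) * I \<omega>)"
  interpret PA: prob_space "distr M borel (a k)" by (rule prob_space_distr) simp
  have IF[measurable]: "I \<in> borel_measurable (F k)"
    unfolding I_def
  proof (rule PA.borel_measurable_lebesgue_integral)
    show "(\<lambda>(\<omega>, v). \<bar>V \<omega> \<bullet> v\<bar>) \<in> borel_measurable (F k \<Otimes>\<^sub>M distr M borel (a k))"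
      by (simp add: measurable_cong_sets[OF sets_pair_measure_cong[OF refl sets_distr] refl])
  qed
  have gF[measurable]: "g \<in> borel_measurable (F k)" unfolding g_def by measurable
  have condh: "AE \<omega> in M. real_cond_exp M (F k) h \<omega> = g \<omega>"
  proof (rule real_cond_exp_charact)
    have Ialt: "I \<omega> = (\<integral>\<omega>'. \<bar>V \<omega> \<bullet> a k \<omega>'\<bar> \<partial>M)" for \<omega>
      unfolding I_def by (rule integral_distr) auto
    have Ib: "0 \<le> I \<omega> \<and> I \<omega> \<le> R" for \<omega>
    proof -
      have bnd: "\<bar>V \<omega> \<bullet> a k \<omega>'\<bar> \<le> R" if "\<omega>' \<in> space M" for \<omega>'
        using Cauchy_Schwarz_ineq2[of "V \<omega>" "a k \<omega>'"] Vb[of \<omega>] a_unit[OF that] by simp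
      have intg: "integrable M (\<lambda>\<omega>'. \<bar>V \<omega> \<bullet> a k \<omega>'\<bar>)"
        by (rule integrable_const_bound[where B=R]) (use bnd in auto)
      have "(\<integral>\<omega>'. \<bar>V \<omega> \<bullet> a k \<omega>'\<bar> \<partial>M) \<le> (\<integral>\<omega>'. R \<partial>M)"
        by (rule integral_mono[OF intg]) (use bnd in auto)
      then show ?thesis unfolding Ialt by (simp add: prob_space)
    qed
    show int_g: "integrable M g"
    proof (rule integrable_const_bound[where B=R])
      show "AE \<omega> in M. norm (g \<omega>) \<le> R"
      proof (rule AE_I2)
        fix \<omega>
        have "\<bar>2 * p - 1\<bar> \<le> 1" using p by simp
        then have "\<bar>2 * p - 1\<bar> * \<bar>I \<omega>\<bar> \<le> 1 * R" using Ib[of \<omega>] by (intro mult_mono) auto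
        then show "norm (g \<omega>) \<le> R" unfolding g_def by (simp add: abs_mult)
      qed
    qed (use gF subalg in \<open>rule measurable_from_subalg[rotated]\<close>)
    show "integrable M h" by (rule int_h)
    show "g \<in> borel_measurable (F k)" by (rule gF)
    fix A assume AF: "A \<in> sets (F k)"
    then have AM[measurable]: "A \<in> sets M" using subalg unfolding subalgebra_def by blast
    note AF[measurable]
    define X1 where "X1 = (\<lambda>\<omega>. 2 * \<xi> k \<omega> - 1)"
    define X2 where "X2 = (\<lambda>\<omega>. indicator A \<omega> * \<bar>V \<omega> \<bullet> a k \<omega>\<bar>)"
    have X1M[measurable]: "X1 \<in> borel_measurable M" unfolding X1_def by measurable
    have X2M[measurable]: "X2 \<in> borel_measurable M" unfolding X2_def by measurable
    have X1b: "\<bar>X1 \<omega>\<bar> \<le> 1" if "\<omega> \<in> space M" for \<omega>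
      unfolding X1_def using \<xi>_ind[OF that, of k] by auto
    have X2b: "\<bar>X2 \<omega>\<bar> \<le> R" if "\<omega> \<in> space M" for \<omega>
    proof -
      have "\<bar>V \<omega> \<bullet> a k \<omega>\<bar> \<le> R"
        using Cauchy_Schwarz_ineq2[of "V \<omega>" "a k \<omega>"] Vb[of \<omega>] a_unit[OF that] by simp
      then show ?thesis unfolding X2_def by (auto simp: indicator_def)
    qed
    have int_X1: "integrable M X1" by (rule integrable_const_bound[where B=1]) (use X1b in auto)
    have int_X2: "integrable M X2" by (rule integrable_const_bound[where B=R]) (use X2b in auto)
    define OTH where "OTH = (\<Union>j. gen_sets M (a j) \<union> gen_sets M (\<nu> j)) \<union> (\<Union>j\<in>UNIV - {k}. gen_sets M (\<xi> j))"
    define GO where "GO = sigma (space M) OTH"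
    have OTH_Pow: "OTH \<subseteq> Pow (space M)" unfolding OTH_def gen_sets_def by auto
    have spGO: "space GO = space M" unfolding GO_def by (simp add: space_measure_of_conv)
    have setsGO: "sets GO = sigma_sets (space M) OTH" unfolding GO_def using OTH_Pow by (rule sets_measure_of)
    have OTH_GO: "OTH \<subseteq> sets GO" unfolding setsGO by auto
    have aGO: "a j \<in> borel_measurable GO" for j
      by (rule meas_of_gen[OF spGO]) (use OTH_GO in \<open>auto simp: OTH_def\<close>)
    have \<nu>GO: "\<nu> j \<in> borel_measurable GO" for j
      by (rule meas_of_gen[OF spGO]) (use OTH_GO in \<open>auto simp: OTH_def\<close>)
    have \<xi>GO: "\<xi> j \<in> borel_measurable GO" if "j \<noteq> k" for j
      by (rule meas_of_gen[OF spGO]) (use OTH_GO that in \<open>auto simp: OTH_def; blast\<close>)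
    have epsGO: "eps j \<in> borel_measurable GO" if "j < k" for j
    proof -
      have [measurable]: "\<xi> j \<in> borel_measurable GO" using \<xi>GO[of j] that by simp
      have [measurable]: "\<nu> j \<in> borel_measurable GO" by (rule \<nu>GO)
      show ?thesis unfolding eps_def by measurable
    qed
    have FGO: "sets (F k) \<subseteq> sets GO"
      unfolding setsF setsGO
    proof (rule sigma_sets_mono)
      have "gen_sets M (a j) \<subseteq> sets GO" "gen_sets M (eps j) \<subseteq> sets GO" if "j < k" for j
        using gen_sets_sets'[OF spGO aGO] gen_sets_sets'[OF spGO epsGO[OF that]] by auto
      then show "(\<Union>j\<in>{..<k}. gen_sets M (a j) \<union> gen_sets M (eps j)) \<subseteq> sigma_sets (space M) OTH"
        unfolding setsGO by blast
    qed
    have VGO[measurable]: "V \<in> borel_measurable GO" by (rule meas_sub[OF _ FGO VF]) (simp add: spF spGO)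
    have AGO[measurable]: "A \<in> sets GO" using AF FGO by blast
    have akGO[measurable]: "a k \<in> borel_measurable GO" by (rule aGO)
    have X2GO: "X2 \<in> borel_measurable GO" unfolding X2_def by measurable
    have ind1: "indep_var borel X1 borel X2"
    proof (rule indep_var_from[OF M \<xi>_indep[of k]])
      show "sigma_algebra (space M) (sigma_sets (space M) (gen_sets M (\<xi> k)))"
        by (rule sigma_algebra_sigma_sets) (rule gen_sets_Pow)
      show "sigma_algebra (space M) (sigma_sets (space M) ((\<Union>j. gen_sets M (a j) \<union> gen_sets M (\<nu> j)) \<union> (\<Union>j\<in>UNIV - {k}. gen_sets M (\<xi> j))))"
        by (rule sigma_algebra_sigma_sets) (use OTH_Pow in \<open>simp add: OTH_def\<close>)
      show "X1 \<in> borel_measurable M" "X2 \<in> borel_measurable M" by measurable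
      fix C :: "real set" assume C: "C \<in> sets borel"
      have "(\<lambda>t::real. 2 * t - 1) -` C \<inter> space borel \<in> sets borel"
        by (rule measurable_sets[OF _ C]) measurable
      then have "\<xi> k -` ((\<lambda>t::real. 2 * t - 1) -` C) \<inter> space M \<in> gen_sets M (\<xi> k)"
        unfolding gen_sets_def by auto
      moreover have "X1 -` C \<inter> space M = \<xi> k -` ((\<lambda>t::real. 2 * t - 1) -` C) \<inter> space M"
        unfolding X1_def by auto
      ultimately show "X1 -` C \<inter> space M \<in> sigma_sets (space M) (gen_sets M (\<xi> k))" by auto
    next
      fix C :: "real set" assume C: "C \<in> sets borel"
      have "X2 -` C \<inter> space GO \<in> sets GO" by (rule measurable_sets[OF X2GO C])
      then show "X2 -` C \<inter> space M \<in> sigma_sets (space M) ((\<Union>j. gen_sets M (a j) \<union> gen_sets M (\<nu> j)) \<union> (\<Union>j\<in>UNIV - {k}. gen_sets M (\<xi> j)))"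
        unfolding spGO setsGO OTH_def .
    qed
    have EX1: "(\<integral>\<omega>. X1 \<omega> \<partial>M) = 2 * p - 1"
    proof -
      have "(\<integral>\<omega>. \<xi> k \<omega> \<partial>M) = (\<integral>\<omega>. indicator {\<omega> \<in> space M. \<xi> k \<omega> = 1} \<omega> \<partial>M)"
        by (rule Bochner_Integration.integral_cong[OF refl]) (use \<xi>_ind in \<open>auto simp: indicator_def\<close>)
      also have "\<dots> = p" using \<xi>_prob[of k] by (simp add: Int_absorb2 subset_iff)
      finally have e: "(\<integral>\<omega>. \<xi> k \<omega> \<partial>M) = p" .
      have int\<xi>: "integrable M (\<xi> k)"
      proof (rule integrable_const_bound[where B=1])
        show "AE x in M. norm (\<xi> k x) \<le> 1"
        proof (rule AE_I2)
          fix x assume "x \<in> space M"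
          then show "norm (\<xi> k x) \<le> 1" using \<xi>_ind[of x k] by auto
        qed
      qed simp
      have "(\<integral>\<omega>. X1 \<omega> \<partial>M) = (\<integral>\<omega>. 2 * \<xi> k \<omega> \<partial>M) - (\<integral>\<omega>. 1 \<partial>M)"
        unfolding X1_def using int\<xi> by (intro Bochner_Integration.integral_diff) auto
      then show ?thesis using e by (simp add: prob_space)
    qed
    define R' where "R' = R"
    define \<phi> :: "(real \<times> (real^'n)) \<times> (real \<times> (real^'n)) \<Rightarrow> real" where
      "\<phi> = (\<lambda>z. if \<bar>fst (fst z)\<bar> \<le> 1 \<and> norm (snd (fst z)) \<le> R \<and> norm (snd (snd z)) \<le> 1
               then fst (fst z) * \<bar>snd (fst z) \<bullet> snd (snd z)\<bar> else 0)"
    define XX where "XX = (\<lambda>\<omega>. (indicator A \<omega> :: real, V \<omega>))"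
    define YY where "YY = (\<lambda>\<omega>. (0 :: real, a k \<omega>))"
    have \<phi>m: "\<phi> \<in> borel_measurable ((borel \<Otimes>\<^sub>M borel) \<Otimes>\<^sub>M (borel \<Otimes>\<^sub>M borel))"
      unfolding \<phi>_def by measurable
    have \<phi>b: "\<bar>\<phi> z\<bar> \<le> R" for z
    proof -
      have "\<bar>fst (fst z) * \<bar>snd (fst z) \<bullet> snd (snd z)\<bar>\<bar> \<le> 1 * (R * 1)"
        if "\<bar>fst (fst z)\<bar> \<le> 1" "norm (snd (fst z)) \<le> R" "norm (snd (snd z)) \<le> 1"
      proof -
        have "\<bar>snd (fst z) \<bullet> snd (snd z)\<bar> \<le> norm (snd (fst z)) * norm (snd (snd z))"
          by (rule Cauchy_Schwarz_ineq2)
        also have "\<dots> \<le> R * 1" using that norm_ge_zero[of "snd (fst z)"] norm_ge_zero[of "snd (snd z)"] by (intro mult_mono) linarith+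
        finally show ?thesis unfolding abs_mult using that by (intro mult_mono) auto
      qed
      then show ?thesis unfolding \<phi>_def using bhi_pos R_def by auto
    qed
    have XXF: "XX \<in> measurable (F k) (borel \<Otimes>\<^sub>M borel)" unfolding XX_def by measurable
    define GA where "GA = sigma (space M) (gen_sets M (a k))"
    have spGA: "space GA = space M" unfolding GA_def by (simp add: space_measure_of_conv)
    have setsGA: "sets GA = sigma_sets (space M) (gen_sets M (a k))"
      unfolding GA_def using gen_sets_Pow by (rule sets_measure_of)
    have aGA[measurable]: "a k \<in> borel_measurable GA"
      by (rule meas_of_gen[OF spGA]) (auto simp: setsGA)
    have YYGA: "YY \<in> measurable GA (borel \<Otimes>\<^sub>M borel)" unfolding YY_def by measurable
    have ind2: "indep_var (borel \<Otimes>\<^sub>M borel) XX (borel \<Otimes>\<^sub>M borel) YY"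
    proof (rule indep_var_from[OF M indep_set_sym[OF M a_indep_F[of k]]])
      show "sigma_algebra (space M) (sets (F k))" using sets.sigma_algebra_axioms[of "F k"] spF by simp
      show "sigma_algebra (space M) (sigma_sets (space M) (gen_sets M (a k)))"
        by (rule sigma_algebra_sigma_sets) (rule gen_sets_Pow)
      show "XX \<in> measurable M (borel \<Otimes>\<^sub>M borel)" unfolding XX_def by measurable
      show "YY \<in> measurable M (borel \<Otimes>\<^sub>M borel)" unfolding YY_def by measurable
      fix C assume C: "C \<in> sets (borel \<Otimes>\<^sub>M borel :: (real \<times> (real^'n)) measure)"
      show "XX -` C \<inter> space M \<in> sets (F k)"
        using measurable_sets[OF XXF C] spF by simp
    next
      fix C assume C: "C \<in> sets (borel \<Otimes>\<^sub>M borel :: (real \<times> (real^'n)) measure)"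
      show "YY -` C \<inter> space M \<in> sigma_sets (space M) (gen_sets M (a k))"
        using measurable_sets[OF YYGA C] spGA setsGA by simp
    qed
    have fr: "(\<integral>\<omega>. \<phi> (XX \<omega>, YY \<omega>) \<partial>M) = (\<integral>\<omega>. (\<integral>\<omega>'. \<phi> (XX \<omega>, YY \<omega>') \<partial>M) \<partial>M)"
      by (rule freeze_integral[OF M ind2 \<phi>m \<phi>b])
    have fr1: "(\<integral>\<omega>. \<phi> (XX \<omega>, YY \<omega>) \<partial>M) = (\<integral>\<omega>. X2 \<omega> \<partial>M)"
    proof (rule Bochner_Integration.integral_cong[OF refl])
      fix \<omega> assume om: "\<omega> \<in> space M"
      show "\<phi> (XX \<omega>, YY \<omega>) = X2 \<omega>"
        unfolding \<phi>_def XX_def YY_def X2_def using Vb[of \<omega>] a_unit[OF om]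
        by (simp add: indicator_def)
    qed
    have fr2: "(\<integral>\<omega>'. \<phi> (XX \<omega>, YY \<omega>') \<partial>M) = indicator A \<omega> * I \<omega>" for \<omega>
    proof -
      have "(\<integral>\<omega>'. \<phi> (XX \<omega>, YY \<omega>') \<partial>M) = (\<integral>\<omega>'. indicator A \<omega> * \<bar>V \<omega> \<bullet> a k \<omega>'\<bar> \<partial>M)"
      proof (rule Bochner_Integration.integral_cong[OF refl])
        fix \<omega>' assume om: "\<omega>' \<in> space M"
        show "\<phi> (XX \<omega>, YY \<omega>') = indicator A \<omega> * \<bar>V \<omega> \<bullet> a k \<omega>'\<bar>"
          unfolding \<phi>_def XX_def YY_def using Vb[of \<omega>] a_unit[OF om]
          by (simp add: indicator_def)
      qed
      also have "\<dots> = indicator A \<omega> * I \<omega>" unfolding Ialt by simp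
      finally show ?thesis .
    qed
    have "(\<integral>x\<in>A. h x \<partial>M) = (\<integral>\<omega>. X1 \<omega> * X2 \<omega> \<partial>M)"
      unfolding set_lebesgue_integral_def X1_def X2_def h_def
      by (rule Bochner_Integration.integral_cong[OF refl]) (simp add: indicator_def)
    also have "\<dots> = (\<integral>\<omega>. X1 \<omega> \<partial>M) * (\<integral>\<omega>. X2 \<omega> \<partial>M)"
      by (rule indep_var_lebesgue_integral[OF ind1 int_X1 int_X2])
    also have "\<dots> = (2 * p - 1) * (\<integral>\<omega>. indicator A \<omega> * I \<omega> \<partial>M)"
      unfolding EX1 fr1[symmetric] fr fr2 ..
    also have "\<dots> = (\<integral>x. (2 * p - 1) * (indicator A x * I x) \<partial>M)"
      by (rule integral_mult_right_zero[symmetric])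
    also have "\<dots> = (\<integral>x\<in>A. g x \<partial>M)"
      unfolding set_lebesgue_integral_def g_def
      by (rule Bochner_Integration.integral_cong[OF refl]) simp
    finally show "(\<integral>x\<in>A. h x \<partial>M) = (\<integral>x\<in>A. g x \<partial>M)" .
  qed
  have sb: "AE \<omega> in M. I \<omega> \<ge> Ct * norm (V \<omega>) / sqrt d"
    using small_ball[OF VF] unfolding I_def .
  have c1: "AE \<omega> in M. real_cond_exp M (F k) f \<omega> \<le> real_cond_exp M (F k) (\<lambda>\<omega>. P \<omega> + Q \<omega> * h \<omega>) \<omega>"
    by (rule real_cond_exp_mono[OF AE_I2[OF pw] int_f int_PQh])
  have c2: "AE \<omega> in M. real_cond_exp M (F k) (\<lambda>\<omega>. P \<omega> + Q \<omega> * h \<omega>) \<omega>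
      = real_cond_exp M (F k) P \<omega> + real_cond_exp M (F k) (\<lambda>\<omega>. Q \<omega> * h \<omega>) \<omega>"
    by (rule real_cond_exp_add[OF int_P int_Qh])
  have c3: "AE \<omega> in M. real_cond_exp M (F k) P \<omega> = P \<omega>"
    by (rule real_cond_exp_F_meas[OF int_P PF])
  have c4: "AE \<omega> in M. real_cond_exp M (F k) (\<lambda>\<omega>. Q \<omega> * h \<omega>) \<omega> = Q \<omega> * real_cond_exp M (F k) h \<omega>"
    by (rule real_cond_exp_mult[OF QF hM int_Qh])
  have fin: "P \<omega> + Q \<omega> * g \<omega> \<le> 1 - s\<^sup>2 / 60"
    if om: "\<omega> \<in> space M" and sbw: "I \<omega> \<ge> Ct * norm (V \<omega>) / sqrt d" for \<omega>
  proof (cases "alo \<le> W \<omega> \<and> W \<omega> < bhi")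
    case True
    have PE: "P \<omega> = ex \<omega> * (1 + 5 / 2 * \<eta>\<^sup>2 * L\<^sup>2 * W \<omega>)" unfolding Pif using True by simp
    have QE: "Q \<omega> = ex \<omega> * (2 * \<eta> * L)" unfolding Qif using True by simp
    have "V \<omega> = u \<omega>" unfolding V_def using True by simp
    then have VE: "norm (V \<omega>) = sqrt (W \<omega>)" unfolding W_def by simp
    have Q0': "0 \<le> Q \<omega>" using Qb by blast
    have "Q \<omega> * g \<omega> \<le> Q \<omega> * (- ((1 - 2 * p) * (Ct * norm (V \<omega>) / sqrt d)))"
    proof -
      have "(1 - 2 * p) * (Ct * norm (V \<omega>) / sqrt d) \<le> (1 - 2 * p) * I \<omega>"
        using sbw p12 by (intro mult_left_mono) auto
      then have "g \<omega> \<le> - ((1 - 2 * p) * (Ct * norm (V \<omega>) / sqrt d))" unfolding g_def by (simp add: algebra_simps)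
      then show ?thesis using Q0' by (intro mult_left_mono) auto
    qed
    also have "(1 - 2 * p) * (Ct * norm (V \<omega>) / sqrt d) = s * sqrt (W \<omega>)"
      unfolding VE s_def by simp
    finally have "P \<omega> + Q \<omega> * g \<omega> \<le> ex \<omega> * (1 + 5 / 2 * \<eta>\<^sup>2 * L\<^sup>2 * W \<omega> - 2 * \<eta> * L * s * sqrt (W \<omega>))"
      unfolding PE QE by (simp add: algebra_simps)
    also have "\<dots> \<le> 1 - s\<^sup>2 / 60"
      using NB(3)[of "W \<omega>"] True alo_eq bhi_eq unfolding ex_def by simp
    finally show ?thesis .
  next
    case False
    then have "P \<omega> = 0" "Q \<omega> = 0" unfolding Pif Qif by auto
    moreover have "s\<^sup>2 / 60 \<le> 1" using Lhi2 by simp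
    ultimately show ?thesis by simp
  qed
  have feq: "(\<lambda>\<omega>. exp (\<eta> * (Y (Suc k) \<omega> - Y k \<omega>)) * indicator {\<omega>. alo \<le> Y k \<omega> \<and> Y k \<omega> < bhi} \<omega>) = f"
    unfolding f_def ..
  have rhs: "1 - Ct\<^sup>2 * (1 - 2 * p)\<^sup>2 / (60 * d) = 1 - s\<^sup>2 / 60" unfolding s2 by simp
  show ?thesis unfolding feq rhs
    using c1 c2 c3 c4 condh sb AE_space
  proof eventually_elim
    case (elim \<omega>)
    then have "real_cond_exp M (F k) f \<omega> \<le> P \<omega> + Q \<omega> * g \<omega>" by simp
    then show ?case using fin[of \<omega>] elim by linarith
  qed
qed

end
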